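(* Let $\mathbf{k}$ be a commutative ring. Then $\beta_{\mathrm{QSym}_{\mathbf{k}}}=\Delta'_P$, i.e. for every composition $\gamma$, $$\sum_{\alpha\in\mathrm{Comp}}\xi_\alpha(M_\gamma)\otimes M_\alpha=\sum_{\substack{A\in\mathbb{N}^{\bullet,\bullet}_{\mathrm{red}};\\ (\mathrm{read}\,A)^{\mathrm{red}}=\gamma}}M_{\mathrm{column}\,A}\otimes M_{\mathrm{row}\,A},$$ where $\xi_\alpha$ is taken for $H=\mathrm{QSym}_{\mathbf{k}}$.
   Context: A composition is a finite sequence of positive integers (not identified with sequences padded by zeros); $\mathrm{Comp}$ is the set of all compositions; $|\alpha|$ is the sum of entries. For $\alpha=(\alpha_1,\ldots,\alpha_\ell)$, $M_\alpha=\sum_{1\le i_1<\cdots<i_\ell}x_{i_1}^{\alpha_1}\cdots x_{i_\ell}^{\alpha_\ell}$; $\mathrm{QSym}_{\mathbf{k}}\subseteq\mathbf{k}[[x_1,x_2,\ldots]]$ is the commutative connected graded Hopf algebra of quasisymmetric functions with basis $(M_\alpha)$, comultiplication $\Delta(M_{(b_1,\ldots,b_\ell)})=\sum_{i=0}^\ell M_{(b_1,\ldots,b_i)}\otimes M_{(b_{i+1},\ldots,b_\ell)}$. For a commutative connected graded $\mathbf{k}$-Hopf algebra $H$ and a composition $\alpha=(a_1,\ldots,a_k)$, $\xi_\alpha:H\to H$ is $m^{(k-1)}\circ\pi_\alpha\circ\Delta^{(k-1)}$, where $\Delta^{(k-1)}:H\to H^{\otimes k}$ is the iterated comultiplication ($\Delta^{(-1)}=\varepsilon$,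 $\Delta^{(0)}=\mathrm{id}$, $\Delta^{(k)}=(\mathrm{id}\otimes\Delta^{(k-1)})\circ\Delta$), $m^{(k-1)}:H^{\otimes k}\to H$ is $h_1\otimes\cdots\otimes h_k\mapsto h_1\cdots h_k$ ($m^{(-1)}$ the unit map), and $\pi_\alpha=\pi_{a_1}\otimes\cdots\otimes\pi_{a_k}$ with $\pi_n:H\to H$ the projection onto $H_n$. The map $\beta_H:H\to H\otimes\mathrm{QSym}_{\mathbf{k}}$ is $\beta_H(h)=\sum_{\alpha\in\mathrm{Comp}}\xi_\alpha(h)\otimes M_\alpha$. For a matrix $A=(a_{i,j})\in\mathbb{N}^{u\times v}$: $\mathrm{column}\,A\in\mathbb{N}^v$ has $j$-th entry $\sum_i a_{i,j}$; $\mathrm{row}\,A\in\mathbb{N}^u$ has $i$-th entry $\sum_j a_{i,j}$; $\mathrm{read}\,A=(a_{1,1},\ldots,a_{1,v},a_{2,1},\ldots,a_{2,v},\ldots,a_{u,1},\ldots,a_{u,v})$. $A$ is reduced if $\mathrm{row}\,A$ and $\mathrm{column}\,A$ have no zero entries. $\mathbb{N}^{\bullet,\bullet}_{\mathrm{red}}$ is the set of reduced matrices in $\mathbb{N}^{u\times v}$ over all $u,v\in\mathbb{N}$. For $w\in\mathbb{N}^k$, $w^{\mathrm{red}}$ is the composition obtained by deleting zero entries. The second comultiplication $\Delta_P:\mathrm{QSym}_{\mathbf{k}}\to\mathrm{QSym}_{\mathbf{k}}\otimes\mathrm{QSym}_{\mathbf{k}}$ is the $\mathbf{k}$-linear map $\Delta_P(M_\gamma)=\sum_{A\in\mathbb{N}^{\bullet,\bullet}_{\mathrm{red}},\,(\mathrm{read}\,A)^{\mathrm{red}}=\gamma}M_{\mathrm{row}\,A}\otimes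 M_{\mathrm{column}\,A}$, and $\Delta'_P=\tau\circ\Delta_P$ with $\tau$ the twist map $x\otimes y\mapsto y\otimes x$. *)

theory Defs
  imports Main "HOL-Library.Poly_Mapping"
begin

definition Comp :: "nat list set" where
  "Comp = {\<alpha>. \<forall>a\<in>set \<alpha>. 0 < a}"

definition csize :: "nat list \<Rightarrow> nat" where
  "csize \<alpha> = sum_list \<alpha>"

type_synonym monomial = "nat \<Rightarrow>\<^sub>0 nat"
type_synonym 'k ps = "monomial \<Rightarrow> 'k"

definition ps_one :: "'k::comm_ring_1 ps" where
  "ps_one = (\<lambda>m. if m = 0 then 1 else 0)"

definition ps_mult :: "'k::comm_ring_1 ps \<Rightarrow> 'k ps \<Rightarrow> 'k ps" where
  "ps_mult f g = (\<lambda>m. \<Sum>p\<in>{(a, b). a + b = m}. f (fst p) * g (snd p))"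

definition ps_prod :: "'k::comm_ring_1 ps list \<Rightarrow> 'k ps" where
  "ps_prod fs = foldr ps_mult fs ps_one"

definition ps_smult :: "'k::comm_ring_1 \<Rightarrow> 'k ps \<Rightarrow> 'k ps" where
  "ps_smult c f = (\<lambda>m. c * f m)"

definition mdeg :: "monomial \<Rightarrow> nat" where
  "mdeg m = (\<Sum>i\<in>Poly_Mapping.keys m. Poly_Mapping.lookup m i)"

definition homog :: "nat \<Rightarrow> 'k::comm_ring_1 ps \<Rightarrow> 'k ps" where
  "homog n f = (\<lambda>m. if mdeg m = n then f m else 0)"

definition compo_of :: "monomial \<Rightarrow> nat list" where
  "compo_of m = map (Poly_Mapping.lookup m) (sorted_list_of_set (Poly_Mapping.keys m))"

text \<open>monomial quasisymmetric function M_alpha (variables indexed from 0)\<close>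
definition Mq :: "nat list \<Rightarrow> 'k::comm_ring_1 ps" where
  "Mq \<alpha> = (\<lambda>m. if compo_of m = \<alpha> then 1 else 0)"

definition lf_sum :: "'i set \<Rightarrow> ('i \<Rightarrow> 'x \<Rightarrow> 'k::comm_ring_1) \<Rightarrow> 'x \<Rightarrow> 'k" where
  "lf_sum I F = (\<lambda>x. \<Sum>i\<in>{i\<in>I. F i x \<noteq> 0}. F i x)"

text \<open>An element of the k-fold tensor power QSym^{(x)k} is represented by its
  coefficients in the basis M_{b_1} (x) ... (x) M_{b_k}, indexed by lists [b_1,...,b_k]
  of compositions.  iter_coprod k gamma is Delta^{(k-1)}(M_gamma):
  Delta^{(-1)} = counit, Delta^{(0)} = id, Delta^{(k)} = (id (x) Delta^{(k-1)}) o Delta,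
  with Delta(M_gamma) = sum_i M_{take i gamma} (x) M_{drop i gamma}.\<close>
fun iter_coprod :: "nat \<Rightarrow> nat list \<Rightarrow> nat list list \<Rightarrow> 'k::comm_ring_1" where
  "iter_coprod 0 \<gamma> = (\<lambda>L. if L = [] \<and> \<gamma> = [] then 1 else 0)"
| "iter_coprod (Suc 0) \<gamma> = (\<lambda>L. if L = [\<gamma>] then 1 else 0)"
| "iter_coprod (Suc (Suc n)) \<gamma> =
     (\<lambda>L. \<Sum>i\<in>{0..length \<gamma>}.
            (if L \<noteq> [] \<and> hd L = take i \<gamma> then iter_coprod (Suc n) (drop i \<gamma>) (tl L) else 0))"

text \<open>xi_alpha(M_gamma) = m^{(k-1)} (pi_alpha (Delta^{(k-1)} M_gamma)), where
  pi_alpha = pi_{a_1} (x) ... (x) pi_{a_k} and m^{(k-1)} multiplies the tensor factors.\<close>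
definition xi :: "nat list \<Rightarrow> nat list \<Rightarrow> 'k::comm_ring_1 ps" where
  "xi \<alpha> \<gamma> = lf_sum {L. iter_coprod (length \<alpha>) \<gamma> L \<noteq> (0::'k)}
      (\<lambda>L. ps_smult (iter_coprod (length \<alpha>) \<gamma> L)
               (ps_prod (map2 (\<lambda>a \<beta>. homog a (Mq \<beta>)) \<alpha> L)))"

text \<open>f (x) g is identified with f(x) g(y), i.e. the function (m,n) |-> f m * g n.\<close>
definition ps_tensor :: "'k::comm_ring_1 ps \<Rightarrow> 'k ps \<Rightarrow> (monomial \<times> monomial \<Rightarrow> 'k)" where
  "ps_tensor f g = (\<lambda>(m, n). f m * g n)"

text \<open>A matrix in N^{u x v} is a triple (u, v, a) with a i j the entry in row i,
  column j (0-indexed), and a i j = 0 outside the range.\<close>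
type_synonym natmat = "nat \<times> nat \<times> (nat \<Rightarrow> nat \<Rightarrow> nat)"

definition natmats :: "natmat set" where
  "natmats = {(u, v, a). \<forall>i j. (u \<le> i \<or> v \<le> j) \<longrightarrow> a i j = 0}"

definition mcolumn :: "natmat \<Rightarrow> nat list" where
  "mcolumn A = (case A of (u, v, a) \<Rightarrow> map (\<lambda>j. \<Sum>i<u. a i j) [0..<v])"

definition mrow :: "natmat \<Rightarrow> nat list" where
  "mrow A = (case A of (u, v, a) \<Rightarrow> map (\<lambda>i. \<Sum>j<v. a i j) [0..<u])"

definition mread :: "natmat \<Rightarrow> nat list" where
  "mread A = (case A of (u, v, a) \<Rightarrow> concat (map (\<lambda>i. map (\<lambda>j. a i j) [0..<v]) [0..<u]))"

definition reduced :: "natmat \<Rightarrow> bool" where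
  "reduced A \<longleftrightarrow> (\<forall>x\<in>set (mrow A). x \<noteq> 0) \<and> (\<forall>x\<in>set (mcolumn A). x \<noteq> 0)"

definition red :: "nat list \<Rightarrow> nat list" where
  "red w = filter (\<lambda>x. x \<noteq> 0) w"

end

theory Submission
  imports Defs
begin

lemma iter_coprod_eq:
  "iter_coprod k \<gamma> L = (if length L = k \<and> concat L = \<gamma> then (1::'k::comm_ring_1) else 0)"
proof (induction k \<gamma> arbitrary: L rule: iter_coprod.induct)
  case (1 \<gamma>)
  then show ?case by auto
next
  case (2 \<gamma>)
  then show ?case by (auto simp: length_Suc_conv)
next
  case (3 n \<gamma>)
  let ?P = "length L = Suc (Suc n) \<and> concat L = \<gamma>"
  have eq: "(if L \<noteq> [] \<and> hd L = take i \<gamma> then iter_coprod (Suc n) (drop i \<gamma>) (tl L) else 0)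
      = (if ?P \<and> i = length (hd L) then (1::'k) else 0)" if i: "i \<in> {0..length \<gamma>}" for i
  proof -
    have "(L \<noteq> [] \<and> hd L = take i \<gamma> \<and> length (tl L) = Suc n \<and> concat (tl L) = drop i \<gamma>)
       \<longleftrightarrow> (?P \<and> i = length (hd L))"
    proof
      assume a: "L \<noteq> [] \<and> hd L = take i \<gamma> \<and> length (tl L) = Suc n \<and> concat (tl L) = drop i \<gamma>"
      then obtain x xs where L: "L = x # xs" by (cases L) auto
      show "?P \<and> i = length (hd L)" using a i L by auto
    next
      assume a: "?P \<and> i = length (hd L)"
      then obtain x xs where L: "L = x # xs" by (cases L) auto
      show "L \<noteq> [] \<and> hd L = take i \<gamma> \<and> length (tl L) = Suc n \<and> concat (tl L) = drop i \<gamma>"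
        using a L by auto
    qed
    moreover have "L \<noteq> [] \<and> hd L = take i \<gamma> \<Longrightarrow> iter_coprod (Suc n) (drop i \<gamma>) (tl L) = (if length (tl L) = Suc n \<and> concat (tl L) = drop i \<gamma> then (1::'k) else 0)"
      using "3.IH"[OF i] by blast
    ultimately show ?thesis by (smt (verit))
  qed
  have "iter_coprod (Suc (Suc n)) \<gamma> L = (\<Sum>i\<in>{0..length \<gamma>}. (if ?P \<and> i = length (hd L) then (1::'k) else 0))"
    using eq by simp
  also have "\<dots> = (if ?P then 1 else 0)"
  proof (cases ?P)
    case True
    then obtain x xs where L: "L = x # xs" by (cases L) auto
    have "length (hd L) \<in> {0..length \<gamma>}" using True L by auto
    then show ?thesis using True by (simp add: sum.delta')
  next
    case False
    then show ?thesis by (simp only: simp_thms if_False sum.neutral_const)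
  qed
  finally show ?case .
qed

definition Dm :: "monomial \<Rightarrow> monomial set" where
  "Dm m = {p. \<exists>q. p + q = m}"

lemma lookup_le_of_add: "p + q = (m::monomial) \<Longrightarrow> Poly_Mapping.lookup p x \<le> Poly_Mapping.lookup m x"
  by (auto simp: lookup_add)

lemma keys_sub_of_add: "p + q = (m::monomial) \<Longrightarrow> Poly_Mapping.keys p \<subseteq> Poly_Mapping.keys m"
  by (auto simp: in_keys_iff lookup_add)

lemma finite_Dm: "finite (Dm m)"
proof -
  let ?ks = "sorted_list_of_set (Poly_Mapping.keys m)"
  let ?M = "mdeg m"
  let ?f = "\<lambda>p. map (Poly_Mapping.lookup p) ?ks"
  have inj: "inj_on ?f (Dm m)"
  proof (rule inj_onI)
    fix p p' assume p: "p \<in> Dm m" and p': "p' \<in> Dm m" and e: "?f p = ?f p'"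
    show "p = p'"
    proof (rule poly_mapping_eqI)
      fix x
      show "Poly_Mapping.lookup p x = Poly_Mapping.lookup p' x"
      proof (cases "x \<in> Poly_Mapping.keys m")
        case True
        then show ?thesis using e by (simp add: map_eq_conv)
      next
        case False
        then have "x \<notin> Poly_Mapping.keys p" "x \<notin> Poly_Mapping.keys p'"
          using p p' keys_sub_of_add unfolding Dm_def by blast+
        then show ?thesis by (simp add: in_keys_iff)
      qed
    qed
  qed
  have "?f ` Dm m \<subseteq> {xs. set xs \<subseteq> {..?M} \<and> length xs = length ?ks}"
  proof (intro subsetI)
    fix xs assume "xs \<in> ?f ` Dm m"
    then obtain p where p: "p \<in> Dm m" and xs: "xs = ?f p" by blast
    have "y \<in> {..?M}" if y: "y \<in> set xs" for y
    proof -
      obtain x where x: "x \<in> Poly_Mapping.keys m" and yx: "y = Poly_Mapping.lookup p x" using y xs by auto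
      have "y \<le> Poly_Mapping.lookup m x" using p yx lookup_le_of_add unfolding Dm_def by blast
      also have "\<dots> \<le> ?M" unfolding mdeg_def using x by (intro member_le_sum) auto
      finally show "y \<in> {..?M}" by simp
    qed
    then show "xs \<in> {xs. set xs \<subseteq> {..?M} \<and> length xs = length ?ks}" using xs by auto
  qed
  then show ?thesis by (rule inj_on_finite[OF inj]) (intro finite_lists_length_eq, simp)
qed

lemma finite_pairs: "finite {(a, b). a + b = (m::monomial)}"
proof -
  have "{(a, b). a + b = m} \<subseteq> Dm m \<times> Dm m" unfolding Dm_def by (auto, metis add.commute)
  then show ?thesis using finite_Dm by (meson finite_SigmaI finite_subset)
qed

lemma in_set_sum_list: "p \<in> set ms \<Longrightarrow> \<exists>q. p + q = sum_list (ms::monomial list)"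
proof (induction ms)
  case (Cons a ms)
  show ?case
  proof (cases "p = a")
    case True then show ?thesis by auto
  next
    case False
    then obtain q where "p + q = sum_list ms" using Cons by auto
    then have "p + (q + a) = sum_list (a # ms)" by (simp add: add_ac)
    then show ?thesis by blast
  qed
qed simp

lemma finite_lists_sum: "finite {ms. length ms = n \<and> sum_list ms = (m::monomial)}"
proof -
  have "{ms. length ms = n \<and> sum_list ms = m} \<subseteq> {ms. set ms \<subseteq> Dm m \<and> length ms = n}"
    unfolding Dm_def using in_set_sum_list by blast
  then show ?thesis using finite_lists_length_eq[OF finite_Dm] by (rule finite_subset)
qed

definition Cnt :: "nat list \<Rightarrow> nat list list \<Rightarrow> monomial \<Rightarrow> monomial list set" where
  "Cnt \<alpha> L m = {ms. length ms = length L \<and> sum_list ms = m \<and> map compo_of ms = L \<and> map mdeg ms = \<alpha>}"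

lemma finite_Cnt: "finite (Cnt \<alpha> L m)"
  by (rule finite_subset[OF _ finite_lists_sum[of "length L" m]]) (auto simp: Cnt_def)

lemma homog_Mq: "homog a (Mq \<beta>) p = (if mdeg p = a \<and> compo_of p = \<beta> then (1::'k::comm_ring_1) else 0)"
  by (simp add: homog_def Mq_def)

lemma prod_count:
  assumes "length \<alpha> = length L"
  shows "ps_prod (map2 (\<lambda>a \<beta>. homog a (Mq \<beta>)) \<alpha> L) m = (of_nat (card (Cnt \<alpha> L m)) :: 'k::comm_ring_1)"
  using assms
proof (induction \<alpha> L arbitrary: m rule: list_induct2)
  case Nil
  have "Cnt [] [] m = (if m = 0 then {[]} else {})" by (auto simp: Cnt_def)
  then show ?case by (simp add: ps_prod_def ps_one_def)
next
  case (Cons a \<alpha> \<beta> L)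
  let ?P = "{(p, q). p + q = m}"
  let ?c = "\<lambda>p. mdeg p = a \<and> compo_of p = \<beta>"
  let ?Q = "{pq \<in> ?P. ?c (fst pq)}"
  have fP: "finite ?P" by (rule finite_pairs)
  have IH': "\<And>q. ps_prod (map2 (\<lambda>a \<beta>. homog a (Mq \<beta>)) \<alpha> L) q = (of_nat (card (Cnt \<alpha> L q)) :: 'k)"
    by (rule Cons.IH)
  have "ps_prod (map2 (\<lambda>a \<beta>. homog a (Mq \<beta>)) (a # \<alpha>) (\<beta> # L)) m
      = (ps_mult (homog a (Mq \<beta>)) (ps_prod (map2 (\<lambda>a \<beta>. homog a (Mq \<beta>)) \<alpha> L)) m :: 'k)"
    by (simp add: ps_prod_def)
  also have "\<dots> = (\<Sum>pq\<in>?P. (if ?c (fst pq) then of_nat (card (Cnt \<alpha> L (snd pq))) else 0))"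
    unfolding ps_mult_def by (intro sum.cong refl) (simp only: IH' homog_Mq, simp)
  also have "\<dots> = (\<Sum>pq\<in>?Q. of_nat (card (Cnt \<alpha> L (snd pq))))"
    by (rule sum.inter_filter[OF fP, symmetric])
  also have "\<dots> = of_nat (\<Sum>pq\<in>?Q. card (Cnt \<alpha> L (snd pq)))" by simp
  also have "(\<Sum>pq\<in>?Q. card (Cnt \<alpha> L (snd pq))) = card (SIGMA pq:?Q. Cnt \<alpha> L (snd pq))"
    using fP by (simp add: finite_Cnt)
  also have "\<dots> = card ((\<lambda>(pq, ms). fst pq # ms) ` (SIGMA pq:?Q. Cnt \<alpha> L (snd pq)))"
    by (rule card_image[symmetric]) (auto simp: inj_on_def Cnt_def)
  also have "(\<lambda>(pq, ms). fst pq # ms) ` (SIGMA pq:?Q. Cnt \<alpha> L (snd pq)) = Cnt (a # \<alpha>) (\<beta> # L) m"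
  proof
    show "(\<lambda>(pq, ms). fst pq # ms) ` (SIGMA pq:?Q. Cnt \<alpha> L (snd pq)) \<subseteq> Cnt (a # \<alpha>) (\<beta> # L) m"
      by (auto simp: Cnt_def)
  next
    show "Cnt (a # \<alpha>) (\<beta> # L) m \<subseteq> (\<lambda>(pq, ms). fst pq # ms) ` (SIGMA pq:?Q. Cnt \<alpha> L (snd pq))"
    proof
      fix ms assume "ms \<in> Cnt (a # \<alpha>) (\<beta> # L) m"
      then obtain p ms' where ms: "ms = p # ms'" and h: "length ms' = length L" "p + sum_list ms' = m"
        "compo_of p = \<beta>" "map compo_of ms' = L" "mdeg p = a" "map mdeg ms' = \<alpha>"
        by (cases ms) (auto simp: Cnt_def)
      then have "((p, sum_list ms'), ms') \<in> (SIGMA pq:?Q. Cnt \<alpha> L (snd pq))" by (auto simp: Cnt_def)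
      then show "ms \<in> (\<lambda>(pq, ms). fst pq # ms) ` (SIGMA pq:?Q. Cnt \<alpha> L (snd pq))"
        using ms by force
    qed
  qed
  finally show ?case .
qed

lemma lf_sum_finite: "finite I \<Longrightarrow> lf_sum I F x = (\<Sum>i\<in>I. F i x)"
  unfolding lf_sum_def by (simp add: sum.inter_filter) (metis (no_types, lifting))

lemma lf_sum_sub:
  assumes "{i\<in>I. F i x \<noteq> 0} \<subseteq> J" "finite J" "J \<subseteq> I"
  shows "lf_sum I F x = (\<Sum>i\<in>J. F i x)"
  unfolding lf_sum_def using assms by (intro sum.mono_neutral_left) auto

lemma len_mem_concat: "xs \<in> set L \<Longrightarrow> length xs \<le> length (concat L)"
  by (induction L) auto

lemma finite_splits: "finite {L. length L = k \<and> concat L = (\<gamma>::nat list)}"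
proof -
  let ?A = "{xs. set xs \<subseteq> set \<gamma> \<and> length xs \<le> length \<gamma>}"
  have "finite ?A" by (rule finite_lists_length_le) simp
  moreover have "{L. length L = k \<and> concat L = \<gamma>} \<subseteq> {L. set L \<subseteq> ?A \<and> length L = k}"
    using len_mem_concat by fastforce
  ultimately show ?thesis using finite_lists_length_eq finite_subset by blast
qed

definition Tset :: "nat list \<Rightarrow> nat list \<Rightarrow> monomial \<Rightarrow> monomial list set" where
  "Tset \<alpha> \<gamma> m = {ms. length ms = length \<alpha> \<and> sum_list ms = m \<and> concat (map compo_of ms) = \<gamma> \<and> map mdeg ms = \<alpha>}"

lemma xi_count: "xi \<alpha> \<gamma> m = (of_nat (card (Tset \<alpha> \<gamma> m)) :: 'k::comm_ring_1)"
proof -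
  let ?S = "{L. length L = length \<alpha> \<and> concat L = \<gamma>}"
  have S: "{L. iter_coprod (length \<alpha>) \<gamma> L \<noteq> (0::'k)} = ?S"
    by (simp add: iter_coprod_eq)
  have "xi \<alpha> \<gamma> m = (\<Sum>L\<in>?S. ps_smult (iter_coprod (length \<alpha>) \<gamma> L)
               (ps_prod (map2 (\<lambda>a \<beta>. homog a (Mq \<beta>)) \<alpha> L)) m :: 'k)"
    unfolding xi_def S by (rule lf_sum_finite[OF finite_splits])
  also have "\<dots> = (\<Sum>L\<in>?S. of_nat (card (Cnt \<alpha> L m)))"
    by (intro sum.cong refl) (simp add: ps_smult_def iter_coprod_eq prod_count)
  also have "\<dots> = of_nat (\<Sum>L\<in>?S. card (Cnt \<alpha> L m))" by simp
  also have "(\<Sum>L\<in>?S. card (Cnt \<alpha> L m)) = card (\<Union>L\<in>?S. Cnt \<alpha> L m)"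
    by (rule card_UN_disjoint[symmetric]) (auto simp: finite_splits finite_Cnt, auto simp: Cnt_def)
  also have "(\<Union>L\<in>?S. Cnt \<alpha> L m) = Tset \<alpha> \<gamma> m"
    by (auto simp: Cnt_def Tset_def)
  finally show ?thesis .
qed

definition ksm :: "monomial \<Rightarrow> nat list" where
  "ksm m = sorted_list_of_set (Poly_Mapping.keys m)"

lemma ksm_props: "set (ksm m) = Poly_Mapping.keys m" "distinct (ksm m)" "sorted (ksm m)"
  by (auto simp: ksm_def)

lemma compo_of_ksm: "compo_of m = map (Poly_Mapping.lookup m) (ksm m)"
  by (simp add: compo_of_def ksm_def)

definition Phi :: "monomial \<Rightarrow> monomial list \<Rightarrow> natmat" where
  "Phi m ms = (length ms, length (ksm m),
     \<lambda>i j. if i < length ms \<and> j < length (ksm m) then Poly_Mapping.lookup (ms!i) (ksm m ! j) else 0)"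

lemma lookup_sum_list: "Poly_Mapping.lookup (sum_list ms) x = (\<Sum>i<length ms. Poly_Mapping.lookup (ms!i) x)"
proof -
  have "Poly_Mapping.lookup (sum_list ms) x = sum_list (map (\<lambda>p. Poly_Mapping.lookup p x) ms)"
    by (induction ms) (auto simp: lookup_add)
  also have "\<dots> = (\<Sum>i<length ms. Poly_Mapping.lookup (ms!i) x)"
    by (simp add: sum_list_sum_nth atLeast0LessThan)
  finally show ?thesis .
qed

lemma keys_nth_sub: "sum_list ms = (m::monomial) \<Longrightarrow> i < length ms \<Longrightarrow> Poly_Mapping.keys (ms!i) \<subseteq> Poly_Mapping.keys m"
  by (metis in_set_sum_list nth_mem keys_sub_of_add)

lemma sum_ks:
  assumes "Poly_Mapping.keys p \<subseteq> Poly_Mapping.keys m"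
  shows "(\<Sum>j<length (ksm m). Poly_Mapping.lookup p (ksm m ! j)) = mdeg p"
proof -
  have "mdeg p = (\<Sum>x\<in>Poly_Mapping.keys m. Poly_Mapping.lookup p x)"
    unfolding mdeg_def using assms by (intro sum.mono_neutral_left) (auto simp: in_keys_iff)
  also have "\<dots> = sum_list (map (Poly_Mapping.lookup p) (ksm m))"
    using sum_list_distinct_conv_sum_set[OF ksm_props(2), of "Poly_Mapping.lookup p"] ksm_props(1) by simp
  also have "\<dots> = (\<Sum>j<length (ksm m). Poly_Mapping.lookup p (ksm m ! j))"
    by (simp add: sum_list_sum_nth atLeast0LessThan)
  finally show ?thesis by simp
qed

lemma compo_sub:
  assumes "Poly_Mapping.keys p \<subseteq> Poly_Mapping.keys m"
  shows "compo_of p = filter (\<lambda>x. x \<noteq> 0) (map (Poly_Mapping.lookup p) (ksm m))"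
proof -
  have "sorted_list_of_set (Poly_Mapping.keys p) = filter (\<lambda>x. x \<in> Poly_Mapping.keys p) (ksm m)"
    by (rule sorted_distinct_set_unique) (use assms ksm_props in \<open>auto simp: sorted_wrt_filter\<close>)
  then show ?thesis unfolding compo_of_def by (simp add: filter_map o_def in_keys_iff)
qed

lemma Phi_props:
  assumes sm: "sum_list ms = m"
  shows "Phi m ms \<in> natmats" "mcolumn (Phi m ms) = compo_of m" "mrow (Phi m ms) = map mdeg ms"
    "red (mread (Phi m ms)) = concat (map compo_of ms)"
proof -
  let ?ks = "ksm m"
  show "Phi m ms \<in> natmats" by (auto simp: Phi_def natmats_def)
  show "mcolumn (Phi m ms) = compo_of m"
  proof (rule nth_equalityI)
    show "length (mcolumn (Phi m ms)) = length (compo_of m)"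
      by (simp add: mcolumn_def Phi_def compo_of_ksm)
    fix j assume "j < length (mcolumn (Phi m ms))"
    then have j: "j < length ?ks" by (simp add: mcolumn_def Phi_def)
    have "mcolumn (Phi m ms) ! j = (\<Sum>i<length ms. Poly_Mapping.lookup (ms!i) (?ks ! j))"
      using j by (simp add: mcolumn_def Phi_def)
    also have "\<dots> = Poly_Mapping.lookup m (?ks ! j)" by (metis sm lookup_sum_list)
    finally show "mcolumn (Phi m ms) ! j = compo_of m ! j" using j by (simp add: compo_of_ksm)
  qed
  show "mrow (Phi m ms) = map mdeg ms"
  proof (rule nth_equalityI)
    show "length (mrow (Phi m ms)) = length (map mdeg ms)"
      by (simp add: mrow_def Phi_def)
    fix i assume "i < length (mrow (Phi m ms))"
    then have i: "i < length ms" by (simp add: mrow_def Phi_def)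
    have "mrow (Phi m ms) ! i = (\<Sum>j<length ?ks. Poly_Mapping.lookup (ms!i) (?ks ! j))"
      using i by (simp add: mrow_def Phi_def)
    also have "\<dots> = mdeg (ms ! i)" by (rule sum_ks[OF keys_nth_sub[OF sm i]])
    finally show "mrow (Phi m ms) ! i = map mdeg ms ! i" using i by simp
  qed
  have row: "filter (\<lambda>x. x \<noteq> 0) (map (\<lambda>j. (if i < length ms \<and> j < length ?ks then Poly_Mapping.lookup (ms!i) (?ks ! j) else 0)) [0..<length ?ks])
     = compo_of (ms ! i)" if i: "i < length ms" for i
  proof -
    have "map (\<lambda>j. (if i < length ms \<and> j < length ?ks then Poly_Mapping.lookup (ms!i) (?ks ! j) else 0)) [0..<length ?ks]
        = map (Poly_Mapping.lookup (ms!i)) ?ks"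
      using i by (intro nth_equalityI) auto
    then show ?thesis using compo_sub[OF keys_nth_sub[OF sm i]] by simp
  qed
  have "red (mread (Phi m ms)) = concat (map (\<lambda>i. filter (\<lambda>x. x \<noteq> 0) (map (\<lambda>j. (if i < length ms \<and> j < length ?ks then Poly_Mapping.lookup (ms!i) (?ks ! j) else 0)) [0..<length ?ks])) [0..<length ms])"
    unfolding red_def mread_def Phi_def prod.case filter_concat map_map o_def ..
  also have "\<dots> = concat (map (\<lambda>i. compo_of (ms ! i)) [0..<length ms])"
    by (intro arg_cong[where f=concat] map_cong refl) (use row in simp)
  also have "\<dots> = concat (map compo_of ms)"
    by (rule arg_cong[where f=concat], rule nth_equalityI) auto
  finally show "red (mread (Phi m ms)) = concat (map compo_of ms)" .
qed

lemma compo_pos: "\<forall>a\<in>set (compo_of m). 0 < a"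
  by (auto simp: compo_of_def in_keys_iff)

lemma card_matrices:
  assumes \<alpha>: "\<forall>a\<in>set \<alpha>. 0 < a"
  shows "card {A\<in>natmats. reduced A \<and> red (mread A) = \<gamma> \<and> mcolumn A = compo_of m \<and> mrow A = \<alpha>}
       = card (Tset \<alpha> \<gamma> m)"
proof -
  let ?S = "{A\<in>natmats. reduced A \<and> red (mread A) = \<gamma> \<and> mcolumn A = compo_of m \<and> mrow A = \<alpha>}"
  let ?T = "Tset \<alpha> \<gamma> m"
  let ?ks = "ksm m"
  have inj: "inj_on (Phi m) ?T"
  proof (rule inj_onI)
    fix ms ms' assume ms: "ms \<in> ?T" and ms': "ms' \<in> ?T" and e: "Phi m ms = Phi m ms'"
    have sm: "sum_list ms = m" and sm': "sum_list ms' = m" using ms ms' by (auto simp: Tset_def)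
    have len: "length ms = length ms'" using e by (simp add: Phi_def)
    have ent: "Poly_Mapping.lookup (ms!i) (?ks ! j) = Poly_Mapping.lookup (ms'!i) (?ks ! j)"
      if "i < length ms" "j < length ?ks" for i j
    proof -
      have "snd (snd (Phi m ms)) i j = snd (snd (Phi m ms')) i j" using e by simp
      then show ?thesis using that len by (simp add: Phi_def)
    qed
    show "ms = ms'"
    proof (rule nth_equalityI[OF len])
      fix i assume i: "i < length ms"
      show "ms ! i = ms' ! i"
      proof (rule poly_mapping_eqI)
        fix x
        show "Poly_Mapping.lookup (ms ! i) x = Poly_Mapping.lookup (ms' ! i) x"
        proof (cases "x \<in> Poly_Mapping.keys m")
          case True
          then obtain j where j: "j < length ?ks" "x = ?ks ! j"
            using ksm_props(1)[of m] by (metis in_set_conv_nth)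
          then show ?thesis using ent[OF i j(1)] by simp
        next
          case False
          then have "x \<notin> Poly_Mapping.keys (ms!i)" "x \<notin> Poly_Mapping.keys (ms'!i)"
            using keys_nth_sub[OF sm i] keys_nth_sub[OF sm'] i len by auto
          then show ?thesis by (simp add: in_keys_iff)
        qed
      qed
    qed
  qed
  have img: "Phi m ` ?T = ?S"
  proof
    show "Phi m ` ?T \<subseteq> ?S"
    proof
      fix A assume "A \<in> Phi m ` ?T"
      then obtain ms where ms: "ms \<in> ?T" and A: "A = Phi m ms" by blast
      have sm: "sum_list ms = m" using ms by (simp add: Tset_def)
      note P = Phi_props[OF sm]
      show "A \<in> ?S"
        using P ms A \<alpha> compo_pos[of m] by (auto simp: Tset_def reduced_def)
    qed
  next
    show "?S \<subseteq> Phi m ` ?T"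
    proof
      fix A assume AS: "A \<in> ?S"
      obtain u v a where A: "A = (u, v, a)" by (cases A) auto
      have nat: "\<And>i j. (u \<le> i \<or> v \<le> j) \<Longrightarrow> a i j = 0" using AS A by (auto simp: natmats_def)
      have u: "u = length \<alpha>" using AS A by (auto simp: mrow_def)
      have v: "v = length ?ks" using AS A by (auto simp: mcolumn_def compo_of_ksm dest: arg_cong[where f=length])
      have col: "(\<Sum>i<u. a i j) = Poly_Mapping.lookup m (?ks ! j)" if "j < v" for j
      proof -
        have "mcolumn A ! j = compo_of m ! j" using AS by simp
        then show ?thesis using that v A by (simp add: mcolumn_def compo_of_ksm)
      qed
      define f where "f i x = (\<Sum>j<v. if ?ks ! j = x then a i j else 0)" for i x
      have f_out: "f i x = 0" if "x \<notin> set ?ks" for i x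
        unfolding f_def using that v by (intro sum.neutral) auto
      have fin: "finite {x. f i x \<noteq> 0}" for i
        by (rule finite_subset[of _ "set ?ks"]) (use f_out in force, simp)
      have f_at: "f i (?ks ! j0) = a i j0" if "j0 < v" for i j0
      proof -
        have "f i (?ks ! j0) = (\<Sum>j<v. if j = j0 then a i j else 0)"
          unfolding f_def using that v ksm_props(2)[of m]
          by (intro sum.cong refl) (auto simp: nth_eq_iff_index_eq)
        also have "\<dots> = a i j0" using that by simp
        finally show ?thesis .
      qed
      define ms where "ms = map (\<lambda>i. Abs_poly_mapping (f i)) [0..<u]"
      have lk: "Poly_Mapping.lookup (ms ! i) = f i" if "i < u" for i
        using that fin by (simp add: ms_def)
      have lenms: "length ms = u" by (simp add: ms_def)
      have sm: "sum_list ms = m"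
      proof (rule poly_mapping_eqI)
        fix x
        have "Poly_Mapping.lookup (sum_list ms) x = (\<Sum>i<u. f i x)"
          by (simp add: lookup_sum_list lenms lk)
        also have "\<dots> = Poly_Mapping.lookup m x"
        proof (cases "x \<in> set ?ks")
          case True
          then obtain j where j: "j < v" "x = ?ks ! j" using v by (metis in_set_conv_nth)
          then show ?thesis using col[OF j(1)] f_at by simp
        next
          case False
          then show ?thesis using f_out ksm_props(1)[of m] by (simp add: in_keys_iff)
        qed
        finally show "Poly_Mapping.lookup (sum_list ms) x = Poly_Mapping.lookup m x" .
      qed
      have PA: "Phi m ms = A"
        unfolding Phi_def A lenms using v nat
        by (auto simp: lk f_at intro!: ext)
      note P = Phi_props[OF sm]
      have "ms \<in> ?T" using P PA AS lenms u sm by (auto simp: Tset_def)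
      then show "A \<in> Phi m ` ?T" using PA by blast
    qed
  qed
  show ?thesis using card_image[OF inj] img by simp
qed

theorem proposition5p3:
  fixes \<gamma> :: "nat list"
  assumes "\<gamma> \<in> Comp"
  shows "lf_sum Comp (\<lambda>\<alpha>. ps_tensor (xi \<alpha> \<gamma>) (Mq \<alpha>))
       = lf_sum {A \<in> natmats. reduced A \<and> red (mread A) = \<gamma>}
           (\<lambda>A. ps_tensor (Mq (mcolumn A)) (Mq (mrow A)) :: monomial \<times> monomial \<Rightarrow> 'k::comm_ring_1)"
proof (rule ext)
  fix x :: "monomial \<times> monomial"
  obtain m n where x: "x = (m, n)" by (cases x)
  let ?S = "{A\<in>natmats. reduced A \<and> red (mread A) = \<gamma> \<and> mcolumn A = compo_of m \<and> mrow A = compo_of n}"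
  have cn: "compo_of n \<in> Comp" using compo_pos[of n] by (simp add: Comp_def)
  have "lf_sum Comp (\<lambda>\<alpha>. ps_tensor (xi \<alpha> \<gamma>) (Mq \<alpha>)) x
      = (\<Sum>\<alpha>\<in>{compo_of n}. ps_tensor (xi \<alpha> \<gamma>) (Mq \<alpha>) x :: 'k)"
    by (rule lf_sum_sub) (use cn in \<open>auto simp: x ps_tensor_def Mq_def\<close>)
  also have "\<dots> = xi (compo_of n) \<gamma> m" by (simp add: x ps_tensor_def Mq_def)
  also have "\<dots> = of_nat (card (Tset (compo_of n) \<gamma> m))" by (rule xi_count)
  also have "\<dots> = of_nat (card ?S)" using card_matrices[OF compo_pos[of n], of \<gamma> m] by simp
  also have "\<dots> = (\<Sum>A\<in>?S. (1::'k))" by simp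
  also have "\<dots> = lf_sum {A \<in> natmats. reduced A \<and> red (mread A) = \<gamma>}
           (\<lambda>A. ps_tensor (Mq (mcolumn A)) (Mq (mrow A)) :: monomial \<times> monomial \<Rightarrow> 'k) x"
  proof -
    have e: "{A \<in> {A \<in> natmats. reduced A \<and> red (mread A) = \<gamma>}.
         (ps_tensor (Mq (mcolumn A)) (Mq (mrow A)) :: monomial \<times> monomial \<Rightarrow> 'k) x \<noteq> 0} = ?S"
      by (auto simp: x ps_tensor_def Mq_def)
    show ?thesis unfolding lf_sum_def e
      by (intro sum.cong refl) (auto simp: x ps_tensor_def Mq_def)
  qed
  finally show "lf_sum Comp (\<lambda>\<alpha>. ps_tensor (xi \<alpha> \<gamma>) (Mq \<alpha>)) x
       = lf_sum {A \<in> natmats. reduced A \<and> red (mread A) = \<gamma>}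
           (\<lambda>A. ps_tensor (Mq (mcolumn A)) (Mq (mrow A)) :: monomial \<times> monomial \<Rightarrow> 'k) x" .
qed

end
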